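(* Let $A$ be a block tridiagonal matrix satisfying the standing hypotheses (H), and write $A^{-1}=[Z_{ij}]$ with $Z_{ij}\in\mathbb{C}^{m\times m}$, $i,j=1,\dots,n$. Then $$\|Z_{ij}\|\le \|Z_{jj}\|\prod_{k=i}^{j-1}\tau_k\quad\text{for all } i<j,\qquad \|Z_{ij}\|\le \|Z_{jj}\|\prod_{k=j+1}^{i}\omega_k\quad\text{for all } i>j.$$ Moreover, for $i=1,\dots,n$, $$\frac{\|I\|}{\|A_i\|+\tau_{i-1}\|C_{i-1}\|+\omega_{i+1}\|B_i\|}\le\|Z_{ii}\|,$$ and, whenever $\|A_i^{-1}\|^{-1}-\tau_{i-1}\|C_{i-1}\|-\omega_{i+1}\|B_i\|>0$, $$\|Z_{ii}\|\le\frac{\|I\|}{\|A_i^{-1}\|^{-1}-\tau_{i-1}\|C_{i-1}\|-\omega_{i+1}\|B_i\|},$$ where $C_0=B_n=0$ and $\tau_0=\omega_{n+1}=0$.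
   Context: $\|\cdot\|$ is a submultiplicative matrix norm on $\mathbb{C}^{m\times m}$, $n\ge 2$, and $A$ is block tridiagonal with diagonal blocks $A_1,\dots,A_n$, superdiagonal blocks $B_1,\dots,B_{n-1}$ (block $(i,i+1)$) and subdiagonal blocks $C_1,\dots,C_{n-1}$ (block $(i+1,i)$), all in $\mathbb{C}^{m\times m}$; set $C_0=B_n=0$. Standing hypotheses (H): $A$ is nonsingular; $B_i$ and $C_i$ are nonsingular for $i=1,\dots,n-1$; every $A_i$ is nonsingular and $\|A_i^{-1}C_{i-1}\|+\|A_i^{-1}B_i\|\le 1$ for $i=1,\dots,n$ (row block diagonal dominance); and $\|A_1^{-1}B_1\|<1$, $\|A_n^{-1}C_{n-1}\|<1$. For $i=1,\dots,n$: $\tau_i=\dfrac{\|A_i^{-1}B_i\|}{1-\|A_i^{-1}C_{i-1}\|}$ and $\omega_i=\dfrac{\|A_i^{-1}C_{i-1}\|}{1-\|A_i^{-1}B_i\|}$. *)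

theory Defs
  imports "HOL-Analysis.Analysis"
begin

type_synonym 'm cmat = "complex^'m^'m"

definition submult_matrix_norm :: "('m::finite cmat \<Rightarrow> real) \<Rightarrow> bool" where
  "submult_matrix_norm N \<longleftrightarrow>
     (\<forall>X. 0 \<le> N X) \<and>
     (\<forall>X. N X = 0 \<longleftrightarrow> X = 0) \<and>
     (\<forall>X Y. N (X + Y) \<le> N X + N Y) \<and>
     (\<forall>c X. N (\<chi> i j. c * X $ i $ j) = cmod c * N X) \<and>
     (\<forall>X Y. N (X ** Y) \<le> N X * N Y)"

definition tridiag_block ::
  "(nat \<Rightarrow> 'm::finite cmat) \<Rightarrow> (nat \<Rightarrow> 'm cmat) \<Rightarrow> (nat \<Rightarrow> 'm cmat) \<Rightarrow> nat \<Rightarrow> nat \<Rightarrow> 'm cmat" where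
  "tridiag_block A B C i j =
     (if j = i then A i else if j = i + 1 then B i else if i = j + 1 then C j else 0)"

definition is_block_inverse ::
  "nat \<Rightarrow> (nat \<Rightarrow> nat \<Rightarrow> 'm::finite cmat) \<Rightarrow> (nat \<Rightarrow> nat \<Rightarrow> 'm cmat) \<Rightarrow> bool" where
  "is_block_inverse n M Z \<longleftrightarrow>
     (\<forall>i\<in>{1..n}. \<forall>j\<in>{1..n}.
        (\<Sum>k=1..n. M i k ** Z k j) = (if i = j then mat 1 else 0) \<and>
        (\<Sum>k=1..n. Z i k ** M k j) = (if i = j then mat 1 else 0))"

definition block_nonsingular :: "nat \<Rightarrow> (nat \<Rightarrow> nat \<Rightarrow> 'm::finite cmat) \<Rightarrow> bool" where
  "block_nonsingular n M \<longleftrightarrow> (\<exists>Z. is_block_inverse n M Z)"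

definition tau ::
  "('m::finite cmat \<Rightarrow> real) \<Rightarrow> (nat \<Rightarrow> 'm cmat) \<Rightarrow> (nat \<Rightarrow> 'm cmat) \<Rightarrow> (nat \<Rightarrow> 'm cmat) \<Rightarrow> nat \<Rightarrow> real" where
  "tau N A B C i = (if i = 0 then 0 else
     N (matrix_inv (A i) ** B i) / (1 - N (matrix_inv (A i) ** C (i - 1))))"

definition omega ::
  "('m::finite cmat \<Rightarrow> real) \<Rightarrow> nat \<Rightarrow> (nat \<Rightarrow> 'm cmat) \<Rightarrow> (nat \<Rightarrow> 'm cmat) \<Rightarrow> (nat \<Rightarrow> 'm cmat) \<Rightarrow> nat \<Rightarrow> real" where
  "omega N n A B C i = (if i = n + 1 then 0 else
     N (matrix_inv (A i) ** C (i - 1)) / (1 - N (matrix_inv (A i) ** B i)))"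

end

theory Submission
  imports Defs
begin

lemma minv:
  fixes X :: "'m::finite cmat"
  assumes "invertible X"
  shows "X ** matrix_inv X = mat 1" "matrix_inv X ** X = mat 1"
proof -
  have "\<exists>A'. X ** A' = mat 1 \<and> A' ** X = mat 1" using assms unfolding invertible_def by auto
  from someI_ex[OF this] show "X ** matrix_inv X = mat 1" "matrix_inv X ** X = mat 1"
    unfolding matrix_inv_def by auto
qed

lemma mat1_nz: "(mat 1 :: 'm::finite cmat) \<noteq> 0"
proof
  assume "(mat 1 :: 'm::finite cmat) = 0"
  then have "(mat 1 :: 'm::finite cmat) $ undefined $ undefined = 0" by simp
  then show False by (simp add: mat_def)
qed

lemma inv_nz:
  fixes X Y :: "'m::finite cmat"
  assumes "invertible X" "invertible Y"
  shows "matrix_inv X ** Y \<noteq> 0"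
proof
  assume h: "matrix_inv X ** Y = 0"
  have "Y = X ** (matrix_inv X ** Y)" by (simp add: matrix_mul_assoc minv[OF assms(1)])
  also have "\<dots> = 0" using h by simp
  finally have "Y = 0" .
  then show False using assms(2) mat1_nz unfolding invertible_def by auto
qed

lemma minv_nz:
  fixes X :: "'m::finite cmat"
  assumes "invertible X"
  shows "matrix_inv X \<noteq> 0"
  using minv[OF assms] mat1_nz by (metis times0_left)

lemma neg_mat: "(-X :: 'm::finite cmat) = (\<chi> i j. (-1) * X $ i $ j)"
  by (simp add: vec_eq_iff)

lemma N_props:
  fixes N :: "'m::finite cmat \<Rightarrow> real"
  assumes "submult_matrix_norm N"
  shows "N X \<ge> 0" "N 0 = 0" "N (X + Y) \<le> N X + N Y" "N (X ** Y) \<le> N X * N Y"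
    "N (-X) = N X" "X \<noteq> 0 \<Longrightarrow> N X > 0" "N (X - Y) \<le> N X + N Y"
proof -
  show a: "N X \<ge> 0" "N 0 = 0" "N (X + Y) \<le> N X + N Y" "N (X ** Y) \<le> N X * N Y"
    using assms unfolding submult_matrix_norm_def by auto
  show b: "N (-X) = N X" for X
    using assms unfolding submult_matrix_norm_def neg_mat by (metis norm_minus_cancel norm_one mult_1)
  show "X \<noteq> 0 \<Longrightarrow> N X > 0"
    using assms unfolding submult_matrix_norm_def by (metis order_le_less)
  have "N (X + - Y) \<le> N X + N (-Y)" using assms unfolding submult_matrix_norm_def by blast
  then show "N (X - Y) \<le> N X + N Y" by (simp add: b)
qed

lemma step_ineq:
  fixes x y p b c t :: real
  assumes "x \<le> c * p + b * y" "p \<le> t * x" "0 \<le> t" "t \<le> 1" "0 \<le> c" "c < 1"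
    "0 \<le> x" "0 \<le> y" "0 \<le> b"
  shows "x \<le> b / (1 - c) * y"
proof -
  have "c * p \<le> c * (t * x)" using assms by (simp add: mult_left_mono)
  also have "\<dots> \<le> c * x" using assms by (intro mult_left_mono) (auto simp: mult_left_le_one_le)
  finally have "(1 - c) * x \<le> b * y" using assms(1) by (simp add: algebra_simps)
  then show ?thesis using assms by (simp add: field_simps)
qed

lemma row_sum:
  fixes A B C :: "nat \<Rightarrow> 'm::finite cmat" and Z :: "nat \<Rightarrow> nat \<Rightarrow> 'm cmat"
  assumes "1 \<le> i" "i \<le> n" "C 0 = 0" "B n = 0"
  shows "(\<Sum>k=1..n. tridiag_block A B C i k ** Z k j)
        = C (i - 1) ** Z (i - 1) j + A i ** Z i j + B i ** Z (i + 1) j"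
proof -
  have eq: "tridiag_block A B C i k ** Z k j =
      (if k = i - 1 then C (i - 1) ** Z (i - 1) j else 0) + (if k = i then A i ** Z i j else 0)
      + (if k = i + 1 then B i ** Z (i + 1) j else 0)" for k
    using assms(1) by (auto simp: tridiag_block_def)
  have "(\<Sum>k=1..n. tridiag_block A B C i k ** Z k j) =
     (\<Sum>k=1..n. (if k = i - 1 then C (i - 1) ** Z (i - 1) j else 0))
     + (\<Sum>k=1..n. (if k = i then A i ** Z i j else 0))
     + (\<Sum>k=1..n. (if k = i + 1 then B i ** Z (i + 1) j else 0))"
    unfolding eq sum.distrib by simp
  also have "\<dots> = C (i - 1) ** Z (i - 1) j + A i ** Z i j + B i ** Z (i + 1) j"
    using assms by (cases "i = n") (auto simp: sum.delta)
  finally show ?thesis .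
qed

lemma mat_diff_right:
  fixes X Y P :: "'m::finite cmat"
  shows "P ** (X - Y) = P ** X - P ** Y"
proof -
  have "P ** (X - Y) + P ** Y = P ** X" by (metis diff_add_cancel matrix_add_ldistrib)
  then show ?thesis by (metis add_diff_cancel)
qed

lemma solve3: "(P::'a::ab_group_add) + X + Q = R \<Longrightarrow> X = R - P - Q"
  by (simp add: algebra_simps)

lemma mat_neg_right:
  fixes X P :: "'m::finite cmat"
  shows "P ** (- X) = - (P ** X)"
  using mat_diff_right[of P 0 X] by simp

lemma up_ineq:
  fixes z a I s1 s2 :: real
  assumes "z \<le> a * (I + s1 * z + s2 * z)" "a > 0" "1 / a - s1 - s2 > 0"
  shows "z \<le> I / (1 / a - s1 - s2)"
proof -
  have "z / a \<le> I + s1 * z + s2 * z" using assms by (simp add: divide_le_eq mult.commute)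
  then have "z * (1 / a - s1 - s2) \<le> I" by (simp add: algebra_simps)
  then show ?thesis using assms(3) by (simp add: le_divide_eq)
qed

lemma low_ineq:
  fixes z d I :: real
  assumes "I \<le> d * z" "0 \<le> I" "0 \<le> z"
  shows "I / d \<le> z"
proof (cases "d > 0")
  case True then show ?thesis using assms by (simp add: divide_le_eq mult.commute)
next
  case False then have "I / d \<le> 0" using assms by (simp add: divide_nonneg_nonpos)
  then show ?thesis using assms by linarith
qed

theorem theorem2p6:
  fixes N :: "'m::finite cmat \<Rightarrow> real"
    and n :: nat
    and A B C :: "nat \<Rightarrow> 'm cmat"
    and Z :: "nat \<Rightarrow> nat \<Rightarrow> 'm cmat"
  assumes norm: "submult_matrix_norm N"
    and n2: "n \<ge> 2"
    and C0: "C 0 = 0" and Bn: "B n = 0"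
    and nonsing: "block_nonsingular n (tridiag_block A B C)"
    and Zinv: "is_block_inverse n (tridiag_block A B C) Z"
    and BC_inv: "\<And>i. 1 \<le> i \<Longrightarrow> i \<le> n - 1 \<Longrightarrow> invertible (B i) \<and> invertible (C i)"
    and A_inv: "\<And>i. 1 \<le> i \<Longrightarrow> i \<le> n \<Longrightarrow> invertible (A i)"
    and dom: "\<And>i. 1 \<le> i \<Longrightarrow> i \<le> n \<Longrightarrow>
               N (matrix_inv (A i) ** C (i - 1)) + N (matrix_inv (A i) ** B i) \<le> 1"
    and first: "N (matrix_inv (A 1) ** B 1) < 1"
    and last: "N (matrix_inv (A n) ** C (n - 1)) < 1"
  shows "(\<forall>i j. 1 \<le> i \<longrightarrow> i < j \<longrightarrow> j \<le> n \<longrightarrow>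
            N (Z i j) \<le> N (Z j j) * (\<Prod>k\<in>{i..<j}. tau N A B C k))
       \<and> (\<forall>i j. 1 \<le> j \<longrightarrow> j < i \<longrightarrow> i \<le> n \<longrightarrow>
            N (Z i j) \<le> N (Z j j) * (\<Prod>k\<in>{j<..i}. omega N n A B C k))
       \<and> (\<forall>i. 1 \<le> i \<longrightarrow> i \<le> n \<longrightarrow>
            N (mat 1) / (N (A i) + tau N A B C (i - 1) * N (C (i - 1))
                          + omega N n A B C (i + 1) * N (B i)) \<le> N (Z i i))
       \<and> (\<forall>i. 1 \<le> i \<longrightarrow> i \<le> n \<longrightarrow>
            1 / N (matrix_inv (A i)) - tau N A B C (i - 1) * N (C (i - 1))
              - omega N n A B C (i + 1) * N (B i) > 0 \<longrightarrow>
            N (Z i i) \<le> N (mat 1) / (1 / N (matrix_inv (A i)) - tau N A B C (i - 1) * N (C (i - 1))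
              - omega N n A B C (i + 1) * N (B i)))"
proof -
  note NP = N_props[OF norm]
  define c where "c i = N (matrix_inv (A i) ** C (i - 1))" for i
  define b where "b i = N (matrix_inv (A i) ** B i)" for i
  define t where "t = tau N A B C"
  define w where "w = omega N n A B C"
  have c0: "c i \<ge> 0" "b i \<ge> 0" for i unfolding c_def b_def by (simp_all add: NP)
  have c1: "c 1 = 0" unfolding c_def using C0 by (simp add: NP)
  have bn: "b n = 0" unfolding b_def using Bn by (simp add: NP)
  have clt: "c i < 1" if "1 \<le> i" "i \<le> n" for i
  proof (cases "i = n")
    case True then show ?thesis using last unfolding c_def by simp
  next
    case False
    have "invertible (B i)" using BC_inv[of i] that False by auto
    then have "b i > 0" unfolding b_def using NP(6)[OF inv_nz[OF A_inv[OF that]]] by auto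
    then show ?thesis using dom[OF that] unfolding b_def c_def by linarith
  qed
  have blt: "b i < 1" if "1 \<le> i" "i \<le> n" for i
  proof (cases "i = 1")
    case True then show ?thesis using first unfolding b_def by simp
  next
    case False
    have "invertible (C (i - 1))" using BC_inv[of "i - 1"] that False by auto
    then have "c i > 0" unfolding c_def using NP(6)[OF inv_nz[OF A_inv[OF that]]] by auto
    then show ?thesis using dom[OF that] unfolding b_def c_def by linarith
  qed
  have teq: "t i = b i / (1 - c i)" if "1 \<le> i" for i
    using that unfolding t_def tau_def b_def c_def by simp
  have weq: "w i = c i / (1 - b i)" if "i \<noteq> n + 1" for i
    using that unfolding w_def omega_def b_def c_def by simp
  have t01: "0 \<le> t i \<and> t i \<le> 1" if "1 \<le> i" "i \<le> n" for i
    using teq[OF that(1)] clt[OF that] c0[of i] dom[OF that] unfolding b_def c_def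
    by (simp add: divide_le_eq_1)
  have w01: "0 \<le> w i \<and> w i \<le> 1" if "1 \<le> i" "i \<le> n" for i
    using weq[of i] that blt[OF that] c0[of i] dom[OF that] unfolding b_def c_def
    by (simp add: divide_le_eq_1)
  have row: "C (i - 1) ** Z (i - 1) j + A i ** Z i j + B i ** Z (i + 1) j = (if i = j then mat 1 else 0)"
    if "1 \<le> i" "i \<le> n" "1 \<le> j" "j \<le> n" for i j
  proof -
    have "(\<Sum>k=1..n. tridiag_block A B C i k ** Z k j) = (if i = j then mat 1 else 0)"
      using Zinv that unfolding is_block_inverse_def by simp
    then show ?thesis using row_sum[of i n C B A Z j, OF that(1,2) C0 Bn] by simp
  qed
  have AZ: "A i ** Z i j = (if i = j then mat 1 else 0) - C (i - 1) ** Z (i - 1) j - B i ** Z (i + 1) j"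
    if "1 \<le> i" "i \<le> n" "1 \<le> j" "j \<le> n" for i j
    using row[OF that] solve3 by blast
  have Zeq: "Z i j = matrix_inv (A i) ** (A i ** Z i j)" if "1 \<le> i" "i \<le> n" for i j
    by (simp add: matrix_mul_assoc minv[OF A_inv[OF that]])
  have F2: "N (Z i j) \<le> c i * N (Z (i - 1) j) + b i * N (Z (i + 1) j)"
    if "1 \<le> i" "i \<le> n" "1 \<le> j" "j \<le> n" "i \<noteq> j" for i j
  proof -
    have "Z i j = 0 - (matrix_inv (A i) ** C (i - 1)) ** Z (i - 1) j - (matrix_inv (A i) ** B i) ** Z (i + 1) j"
      using Zeq[OF that(1,2), of j] AZ[OF that(1-4)] that(5)
      by (simp add: mat_diff_right mat_neg_right matrix_mul_assoc)
    also have "N \<dots> \<le> N (0 - (matrix_inv (A i) ** C (i - 1)) ** Z (i - 1) j) + N ((matrix_inv (A i) ** B i) ** Z (i + 1) j)"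
      by (rule NP(7))
    also have "\<dots> \<le> N ((matrix_inv (A i) ** C (i - 1)) ** Z (i - 1) j) + N ((matrix_inv (A i) ** B i) ** Z (i + 1) j)"
      using NP(7)[of 0] NP(2) by (simp add: NP(5))
    also have "\<dots> \<le> c i * N (Z (i - 1) j) + b i * N (Z (i + 1) j)"
      unfolding c_def b_def by (intro add_mono NP(4))
    finally show ?thesis .
  qed
  have U: "N (Z i j) \<le> t i * N (Z (i + 1) j)" if "j \<le> n" "1 \<le> i" "i < j" for i j
    using that
  proof (induction i)
    case 0 then show ?case by simp
  next
    case (Suc i)
    have f: "N (Z (Suc i) j) \<le> c (Suc i) * N (Z i j) + b (Suc i) * N (Z (Suc i + 1) j)"
      using F2[of "Suc i" j] Suc.prems by simp
    show ?case
    proof (cases "i = 0")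
      case True then show ?thesis using f c1 teq[of 1] by simp
    next
      case False
      have ih: "N (Z i j) \<le> t i * N (Z (Suc i) j)" using Suc False by simp
      have "N (Z (Suc i) j) \<le> b (Suc i) / (1 - c (Suc i)) * N (Z (Suc i + 1) j)"
        by (rule step_ineq[OF f ih]) (use t01[of i] False Suc.prems clt[of "Suc i"] c0 NP(1) in auto)
      then show ?thesis using teq[of "Suc i"] by simp
    qed
  qed
  have Up: "N (Z i j) \<le> N (Z j j) * (\<Prod>k\<in>{i..<j}. t k)" if "1 \<le> i" "i < j" "j \<le> n" for i j
  proof -
    have "i \<le> j" using that by simp
    then show ?thesis
    proof (induction i rule: inc_induct)
      case base then show ?case by simp
    next
      case (step k)
      have "N (Z k j) \<le> t k * N (Z (k + 1) j)" using U[of j k] step that by simp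
      also have "\<dots> \<le> t k * (N (Z j j) * (\<Prod>k\<in>{Suc k..<j}. t k))"
        using step t01[of k] that by (intro mult_left_mono) auto
      also have "\<dots> = N (Z j j) * (\<Prod>k\<in>{k..<j}. t k)"
        using step by (simp add: prod.atLeast_Suc_lessThan)
      finally show ?case .
    qed
  qed
  have L: "N (Z i j) \<le> w i * N (Z (i - 1) j)" if "1 \<le> j" "j < i" "i \<le> n" for i j
  proof -
    have "i \<le> n" using that by simp
    then show ?thesis
    proof (induction i rule: inc_induct)
      case base
      have "N (Z n j) \<le> c n * N (Z (n - 1) j) + b n * N (Z (n + 1) j)"
        using F2[of n j] that by simp
      then show ?case using bn weq[of n] by simp
    next
      case (step k)
      have f: "N (Z k j) \<le> b k * N (Z (k + 1) j) + c k * N (Z (k - 1) j)"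
        using F2[of k j] step that by simp
      have "N (Z k j) \<le> c k / (1 - b k) * N (Z (k - 1) j)"
        by (rule step_ineq[OF f]) (use step w01[of "Suc k"] that blt[of k] c0 NP(1) in auto)
      then show ?case using weq[of k] step by simp
    qed
  qed
  have Lp: "N (Z i j) \<le> N (Z j j) * (\<Prod>k\<in>{j<..i}. w k)" if "1 \<le> j" "j < i" "i \<le> n" for i j
  proof -
    have "j \<le> i" using that by simp
    then show ?thesis
    proof (induction i rule: dec_induct)
      case base then show ?case by simp
    next
      case (step k)
      have "N (Z (Suc k) j) \<le> w (Suc k) * N (Z k j)" using L[of j "Suc k"] step that by simp
      also have "\<dots> \<le> w (Suc k) * (N (Z j j) * (\<Prod>k\<in>{j<..k}. w k))"
        using step w01[of "Suc k"] that by (intro mult_left_mono) auto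
      also have "\<dots> = N (Z j j) * (\<Prod>k\<in>{j<..Suc k}. w k)"
      proof -
        have "{j<..Suc k} = insert (Suc k) {j<..k}" using step by auto
        then show ?thesis by simp
      qed
      finally show ?case .
    qed
  qed
  have hC: "N (C (i - 1) ** Z (i - 1) i) \<le> t (i - 1) * N (C (i - 1)) * N (Z i i)"
    if "1 \<le> i" "i \<le> n" for i
  proof (cases "i = 1")
    case True then show ?thesis using C0 by (simp add: NP)
  next
    case False
    have "N (Z (i - 1) i) \<le> t (i - 1) * N (Z i i)" using U[of i "i - 1"] that False by simp
    then have "N (C (i - 1)) * N (Z (i - 1) i) \<le> N (C (i - 1)) * (t (i - 1) * N (Z i i))"
      by (intro mult_left_mono) (simp_all add: NP)
    then show ?thesis using NP(4)[of "C (i - 1)" "Z (i - 1) i"] by (simp add: algebra_simps)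
  qed
  have hB: "N (B i ** Z (i + 1) i) \<le> w (i + 1) * N (B i) * N (Z i i)"
    if "1 \<le> i" "i \<le> n" for i
  proof (cases "i = n")
    case True then show ?thesis using Bn by (simp add: NP)
  next
    case False
    have "N (Z (i + 1) i) \<le> w (i + 1) * N (Z i i)" using L[of i "i + 1"] that False by simp
    then have "N (B i) * N (Z (i + 1) i) \<le> N (B i) * (w (i + 1) * N (Z i i))"
      by (intro mult_left_mono) (simp_all add: NP)
    then show ?thesis using NP(4)[of "B i" "Z (i + 1) i"] by (simp add: algebra_simps)
  qed
  have low: "N (mat 1) / (N (A i) + t (i - 1) * N (C (i - 1)) + w (i + 1) * N (B i)) \<le> N (Z i i)"
    if "1 \<le> i" "i \<le> n" for i
  proof (rule low_ineq)
    have "N (mat 1) = N (C (i - 1) ** Z (i - 1) i + A i ** Z i i + B i ** Z (i + 1) i)"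
      using row[OF that that] by simp
    also have "\<dots> \<le> N (C (i - 1) ** Z (i - 1) i) + N (A i ** Z i i) + N (B i ** Z (i + 1) i)"
      using NP(3)[of "C (i - 1) ** Z (i - 1) i + A i ** Z i i" "B i ** Z (i + 1) i"]
        NP(3)[of "C (i - 1) ** Z (i - 1) i" "A i ** Z i i"] by linarith
    also have "\<dots> \<le> t (i - 1) * N (C (i - 1)) * N (Z i i) + N (A i) * N (Z i i) + w (i + 1) * N (B i) * N (Z i i)"
      by (intro add_mono hC[OF that] hB[OF that] NP(4))
    finally show "N (mat 1) \<le> (N (A i) + t (i - 1) * N (C (i - 1)) + w (i + 1) * N (B i)) * N (Z i i)"
      by (simp add: algebra_simps)
  qed (simp_all add: NP)
  have up: "N (Z i i) \<le> N (mat 1) / (1 / N (matrix_inv (A i)) - t (i - 1) * N (C (i - 1)) - w (i + 1) * N (B i))"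
    if "1 \<le> i" "i \<le> n" "1 / N (matrix_inv (A i)) - t (i - 1) * N (C (i - 1)) - w (i + 1) * N (B i) > 0" for i
  proof (rule up_ineq[OF _ _ that(3)])
    show "N (matrix_inv (A i)) > 0" using minv_nz[OF A_inv[OF that(1,2)]] NP(6) by auto
    have "N (Z i i) \<le> N (matrix_inv (A i)) * N (A i ** Z i i)"
      using NP(4)[of "matrix_inv (A i)" "A i ** Z i i"] by (simp only: Zeq[OF that(1,2), of i, symmetric])
    also have "N (A i ** Z i i) \<le> N (mat 1) + N (C (i - 1) ** Z (i - 1) i) + N (B i ** Z (i + 1) i)"
      unfolding AZ[OF that(1,2) that(1,2)]
      using NP(7)[of "mat 1 - C (i - 1) ** Z (i - 1) i" "B i ** Z (i + 1) i"]
        NP(7)[of "mat 1" "C (i - 1) ** Z (i - 1) i"] by simp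
    also have "\<dots> \<le> N (mat 1) + t (i - 1) * N (C (i - 1)) * N (Z i i) + w (i + 1) * N (B i) * N (Z i i)"
      by (intro add_mono hC[OF that(1,2)] hB[OF that(1,2)] order_refl)
    finally show "N (Z i i) \<le> N (matrix_inv (A i)) * (N (mat 1) + t (i - 1) * N (C (i - 1)) * N (Z i i) + w (i + 1) * N (B i) * N (Z i i))"
      using NP(1) by (simp add: mult_left_mono)
  qed
  show ?thesis using Up Lp low up unfolding t_def w_def by blast
qed

end
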